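(* For $\mathbf x\in\Lambda$ with $\mathbf x(t)=2$, $$\Pi^{(1)}_{p_c}(\mathbf x)=\sum_{\mathbf s:\ \mathbf s(t)=1}\mathbb P_{p_c}\big(\{[\mathbf o,\mathbf s\rangle\to\mathbf x\}\circ\{\mathbf o\to\mathbf x\}\big).$$
   Context: Let $\Lambda=\mathbb Z^d\times\mathbb Z_+$; points $\mathbf x=(\mathbf x(s),\mathbf x(t))$; $\mathbf o=(o,0)$. Let $D(x)=\frac1{2d}\mathbf 1\{|x|=1\}$. Oriented percolation with parameter $p\in[0,2d]$: for $\mathbf x=(x,t),\mathbf y=(y,t+1)$ with $x\ne y$ the bond $[\mathbf x,\mathbf y\rangle$ is open with probability $pD(y-x)$, independently; law $\mathbb P_p$. A bond is $b=[\underline b,\bar b\rangle$. $\mathbf x\to\mathbf y$: open directed path from $\mathbf x$ to $\mathbf y$ (with $\mathbf x\to\mathbf x$). $p_c=\inf\{p:\mathbb P_p(\text{infinite open path from }\mathbf o)>0\}$. $\circ$: bond-disjoint occurrence; $\{\mathbf x\Rightarrow\mathbf y\}:=\{\mathbf x\to\mathbf y\}\circ\{\mathbf x\to\mathbf y\}$. $\{b\to\mathbf x\}$: $b$ open and $\bar b\to\mathbf x$ (so $\{[\mathbf o,\mathbf s\rangle\to\mathbf x\}$ means the bond $[\mathbf o,\mathbf s\rangle$ is open and $\mathbf s\to\mathbf x$). $b'$ is pivotal for $\{\mathbf v\to\mathbf x\}$ if $\mathbf v\to\mathbf x$ occurs but not when $b'$ is made closed; $\mathrm{piv}(\mathbf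 v\to\mathbf x)$ the set of these. $\tilde C^b(\mathbf u)$: vertices connected from $\mathbf u$ by open paths not using $b$. For $S\subset\Lambda$, $E(b,\mathbf x;S)=\{b\to\mathbf x\}\cap\{\mathbf x\in S\}\cap\{\underline{b'}\notin S\ \forall b'\in\mathrm{piv}(\bar b\to\mathbf x)\}$. $\Pi^{(1)}_p(\mathbf x)=\sum_{b_1}\mathbb P_p\big(\{\mathbf o\Rightarrow\underline b_1\}\cap E(b_1,\mathbf x;\tilde C^{b_1}(\mathbf o))\big)$ over all bonds. *)

theory Defs
  imports "HOL-Probability.Probability"
begin

text \<open>Points of Lambda = Z^d x Z_+: the dimension d is CARD('d) for a finite type 'd.\<close>
type_synonym 'd vtx = "('d \<Rightarrow> int) \<times> nat"
type_synonym 'd bnd = "'d vtx \<times> 'd vtx"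
type_synonym 'd cfg = "'d bnd \<Rightarrow> bool"

definition origin :: "'d vtx" where
  "origin = ((\<lambda>_. 0), 0)"

definition isbond :: "'d::finite bnd \<Rightarrow> bool" where
  "isbond b \<longleftrightarrow> snd (snd b) = Suc (snd (fst b)) \<and>
     (\<Sum>i\<in>UNIV. \<bar>fst (snd b) i - fst (fst b) i\<bar>) = 1"

text \<open>Probability that the pair b is open: p D(y-x) for bonds, 0 otherwise.\<close>
definition bondprob :: "real \<Rightarrow> 'd::finite bnd \<Rightarrow> real" where
  "bondprob p b = (if isbond b then p / (2 * real CARD('d)) else 0)"

definition Pperc :: "real \<Rightarrow> 'd::finite cfg measure" where
  "Pperc p = (\<Pi>\<^sub>M b\<in>UNIV. measure_pmf (bernoulli_pmf (bondprob p b)))"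

definition conn :: "'d::finite cfg \<Rightarrow> 'd vtx \<Rightarrow> 'd vtx \<Rightarrow> bool" where
  "conn \<omega> u v \<longleftrightarrow> (\<exists>ps. ps \<noteq> [] \<and> hd ps = u \<and> last ps = v \<and>
     (\<forall>i < length ps - 1. isbond (ps ! i, ps ! Suc i) \<and> \<omega> (ps ! i, ps ! Suc i)))"

definition perc_inf :: "'d::finite cfg \<Rightarrow> 'd vtx \<Rightarrow> bool" where
  "perc_inf \<omega> u \<longleftrightarrow> (\<exists>f. f 0 = u \<and> (\<forall>n. isbond (f n, f (Suc n)) \<and> \<omega> (f n, f (Suc n))))"

definition pc :: "'d::finite itself \<Rightarrow> real" where
  "pc _ = Inf {p \<in> {0..2 * real CARD('d)}.
      measure (Pperc p :: 'd cfg measure) {\<omega> \<in> space (Pperc p). perc_inf \<omega> origin} > 0}"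

text \<open>Bond-disjoint occurrence (van den Berg--Kesten): there are disjoint sets of bonds
  K, L such that the configuration on K alone guarantees A and on L alone guarantees B.\<close>
definition witnessed :: "'d bnd set \<Rightarrow> ('d cfg \<Rightarrow> bool) \<Rightarrow> 'd cfg \<Rightarrow> bool" where
  "witnessed K A \<omega> \<longleftrightarrow> (\<forall>\<omega>'. (\<forall>b\<in>K. \<omega>' b = \<omega> b) \<longrightarrow> A \<omega>')"

definition bdisj :: "('d cfg \<Rightarrow> bool) \<Rightarrow> ('d cfg \<Rightarrow> bool) \<Rightarrow> 'd cfg \<Rightarrow> bool" where
  "bdisj A B \<omega> \<longleftrightarrow> (\<exists>K L. K \<inter> L = {} \<and> witnessed K A \<omega> \<and> witnessed L B \<omega>)"

definition dconn :: "'d::finite cfg \<Rightarrow> 'd vtx \<Rightarrow> 'd vtx \<Rightarrow> bool" where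
  "dconn \<omega> u v \<longleftrightarrow> bdisj (\<lambda>\<omega>. conn \<omega> u v) (\<lambda>\<omega>. conn \<omega> u v) \<omega>"

definition bconn :: "'d::finite cfg \<Rightarrow> 'd bnd \<Rightarrow> 'd vtx \<Rightarrow> bool" where
  "bconn \<omega> b x \<longleftrightarrow> \<omega> b \<and> conn \<omega> (snd b) x"

definition pivotal :: "'d::finite cfg \<Rightarrow> 'd bnd \<Rightarrow> 'd vtx \<Rightarrow> 'd vtx \<Rightarrow> bool" where
  "pivotal \<omega> c v x \<longleftrightarrow> conn \<omega> v x \<and> \<not> conn (fun_upd \<omega> c False) v x"

definition Ctil :: "'d::finite cfg \<Rightarrow> 'd bnd \<Rightarrow> 'd vtx \<Rightarrow> 'd vtx set" where
  "Ctil \<omega> b u = {w. conn (fun_upd \<omega> b False) u w}"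

definition Eev :: "'d::finite cfg \<Rightarrow> 'd bnd \<Rightarrow> 'd vtx \<Rightarrow> 'd vtx set \<Rightarrow> bool" where
  "Eev \<omega> b x S \<longleftrightarrow> bconn \<omega> b x \<and> x \<in> S \<and>
     (\<forall>c. pivotal \<omega> c (snd b) x \<longrightarrow> fst c \<notin> S)"

definition Pi1 :: "real \<Rightarrow> 'd::finite vtx \<Rightarrow> real" where
  "Pi1 p x = (\<Sum>\<^sub>\<infinity> b \<in> {b. isbond b}.
     measure (Pperc p) {\<omega> \<in> space (Pperc p).
        dconn \<omega> origin (fst b) \<and> Eev \<omega> b x (Ctil \<omega> b origin)})"

end

theory Submission
  imports Defs
begin

lemma path_time:
  fixes ps :: "'d::finite vtx list"
  shows "ps \<noteq> [] \<Longrightarrow> (\<forall>i < length ps - 1. isbond (ps ! i, ps ! Suc i)) \<Longrightarrow>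
    snd (last ps) = snd (hd ps) + (length ps - 1)"
proof (induction ps)
  case Nil then show ?case by simp
next
  case (Cons a ps)
  show ?case
  proof (cases ps)
    case Nil then show ?thesis by simp
  next
    case (Cons b qs)
    have h: "\<forall>i < length ps - 1. isbond (ps ! i, ps ! Suc i)"
    proof (intro allI impI)
      fix i assume "i < length ps - 1"
      then show "isbond (ps ! i, ps ! Suc i)"
        using Cons.prems(2)[rule_format, of "Suc i"] by simp
    qed
    have "isbond (a, b)" using Cons.prems(2)[rule_format, of 0] Cons by simp
    then have "snd b = Suc (snd a)" by (simp add: isbond_def)
    with Cons.IH[OF _ h] Cons show ?thesis by simp
  qed
qed

lemma conn_time:
  assumes "conn \<omega> u v"
  shows "snd u \<le> snd v" "snd u = snd v \<Longrightarrow> u = v"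
proof -
  obtain ps where ps: "ps \<noteq> []" "hd ps = u" "last ps = v"
    "\<forall>i < length ps - 1. isbond (ps ! i, ps ! Suc i) \<and> \<omega> (ps ! i, ps ! Suc i)"
    using assms unfolding conn_def by blast
  have t: "snd v = snd u + (length ps - 1)" using path_time[of ps] ps by auto
  then show "snd u \<le> snd v" by simp
  assume "snd u = snd v"
  with t have "length ps = 1" using ps(1) by (cases ps) auto
  then show "u = v" using ps by (cases ps) auto
qed

lemma conn_refl: "conn \<omega> u u"
  unfolding conn_def by (rule exI[of _ "[u]"]) simp

lemma conn_step:
  "conn \<omega> u v \<longleftrightarrow> u = v \<or> (\<exists>w. isbond (u, w) \<and> \<omega> (u, w) \<and> conn \<omega> w v)"
proof
  assume "conn \<omega> u v"
  then obtain ps where ps: "ps \<noteq> []" "hd ps = u" "last ps = v"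
    "\<forall>i < length ps - 1. isbond (ps ! i, ps ! Suc i) \<and> \<omega> (ps ! i, ps ! Suc i)"
    unfolding conn_def by blast
  then obtain qs where q: "ps = u # qs" by (cases ps) auto
  show "u = v \<or> (\<exists>w. isbond (u, w) \<and> \<omega> (u, w) \<and> conn \<omega> w v)"
  proof (cases qs)
    case Nil then show ?thesis using ps q by simp
  next
    case (Cons w rs)
    have "isbond (u, w) \<and> \<omega> (u, w)" using ps(4)[rule_format, of 0] q Cons by simp
    moreover have "conn \<omega> w v" unfolding conn_def
    proof (rule exI[of _ qs], intro conjI allI impI)
      show "qs \<noteq> []" "hd qs = w" using Cons by auto
      show "last qs = v" using ps(3) q Cons by simp
      fix i assume "i < length qs - 1"
      then show "isbond (qs ! i, qs ! Suc i)" "\<omega> (qs ! i, qs ! Suc i)"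
        using ps(4)[rule_format, of "Suc i"] q Cons by simp_all
    qed
    ultimately show ?thesis by blast
  qed
next
  assume "u = v \<or> (\<exists>w. isbond (u, w) \<and> \<omega> (u, w) \<and> conn \<omega> w v)"
  then show "conn \<omega> u v"
  proof
    assume "u = v" then show ?thesis by (simp add: conn_refl)
  next
    assume "\<exists>w. isbond (u, w) \<and> \<omega> (u, w) \<and> conn \<omega> w v"
    then obtain w qs where w: "isbond (u, w)" "\<omega> (u, w)" and qs: "qs \<noteq> []" "hd qs = w" "last qs = v"
      "\<forall>i < length qs - 1. isbond (qs ! i, qs ! Suc i) \<and> \<omega> (qs ! i, qs ! Suc i)"
      unfolding conn_def by blast
    then obtain rs where r: "qs = w # rs" by (cases qs) auto
    show ?thesis unfolding conn_def
    proof (rule exI[of _ "u # qs"], intro conjI allI impI)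
      show "u # qs \<noteq> []" "hd (u # qs) = u" by auto
      show "last (u # qs) = v" using qs by simp
      fix i assume i: "i < length (u # qs) - 1"
      show "isbond ((u # qs) ! i, (u # qs) ! Suc i)" "\<omega> ((u # qs) ! i, (u # qs) ! Suc i)"
        using w r qs(4) i by (cases i; simp)+
    qed
  qed
qed

lemma bond_time: "isbond (u, w) \<Longrightarrow> snd w = Suc (snd u)"
  by (simp add: isbond_def)

lemma conn1:
  assumes "snd v = Suc (snd u)"
  shows "conn \<omega> u v \<longleftrightarrow> isbond (u, v) \<and> \<omega> (u, v)"
proof
  assume c: "conn \<omega> u v"
  have "u \<noteq> v" using assms by auto
  then obtain w where w: "isbond (u, w)" "\<omega> (u, w)" "conn \<omega> w v" using c conn_step by metis
  have "w = v" using conn_time(2)[OF w(3)] bond_time[OF w(1)] assms by simp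
  then show "isbond (u, v) \<and> \<omega> (u, v)" using w by simp
next
  assume "isbond (u, v) \<and> \<omega> (u, v)"
  then show "conn \<omega> u v" using conn_step[of \<omega> u v] conn_refl by blast
qed

lemma conn2:
  assumes "snd v = Suc (Suc (snd u))"
  shows "conn \<omega> u v \<longleftrightarrow> (\<exists>w. isbond (u, w) \<and> \<omega> (u, w) \<and> isbond (w, v) \<and> \<omega> (w, v))"
proof
  assume c: "conn \<omega> u v"
  have "u \<noteq> v" using assms by auto
  then obtain w where w: "isbond (u, w)" "\<omega> (u, w)" "conn \<omega> w v" using c conn_step by metis
  then show "\<exists>w. isbond (u, w) \<and> \<omega> (u, w) \<and> isbond (w, v) \<and> \<omega> (w, v)"
  proof -
    have "isbond (w, v) \<and> \<omega> (w, v)" using conn1[of v w \<omega>] bond_time[OF w(1)] assms w(3) by simp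
    then show ?thesis using w by blast
  qed
next
  assume "\<exists>w. isbond (u, w) \<and> \<omega> (u, w) \<and> isbond (w, v) \<and> \<omega> (w, v)"
  then obtain w where "isbond (u, w)" "\<omega> (u, w)" "isbond (w, v)" "\<omega> (w, v)" by blast
  then show "conn \<omega> u v" using conn_step[of \<omega> u v] conn1[of v w] bond_time by metis
qed


lemma snd_origin[simp]: "snd origin = 0"
  by (simp add: origin_def)

lemma witnessed_conn:
  "witnessed K (\<lambda>\<omega>. conn \<omega> u v) \<omega> \<Longrightarrow> conn (\<lambda>c. c \<in> K \<and> \<omega> c) u v"
  unfolding witnessed_def by auto

lemma witnessed_self: "witnessed K A \<omega> \<Longrightarrow> A \<omega>"
  unfolding witnessed_def by auto

lemma lhs_zero:
  assumes b: "isbond b" and nb: "fst b \<noteq> origin" and x: "snd x = 2"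
  shows "\<not> (dconn \<omega> origin (fst b) \<and> Eev \<omega> b x (Ctil \<omega> b origin))"
proof
  assume h: "dconn \<omega> origin (fst b) \<and> Eev \<omega> b x (Ctil \<omega> b origin)"
  then obtain K L where KL: "K \<inter> L = {}" "witnessed K (\<lambda>\<omega>. conn \<omega> origin (fst b)) \<omega>"
    "witnessed L (\<lambda>\<omega>. conn \<omega> origin (fst b)) \<omega>"
    unfolding dconn_def bdisj_def by blast
  have c: "conn \<omega> origin (fst b)" using witnessed_self[OF KL(2)] .
  have cx: "conn \<omega> (snd b) x" using h unfolding Eev_def bconn_def by blast
  have tb: "snd (snd b) = Suc (snd (fst b))" using b by (simp add: isbond_def)
  consider "snd (fst b) = 0" | "snd (fst b) = 1" | "snd (fst b) \<ge> 2" by linarith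
  then show False
  proof cases
    case 1 then show False using conn_time(2)[OF c] nb by simp
  next
    case 2
    have "isbond (origin, fst b) \<and> (origin, fst b) \<in> K \<and> \<omega> (origin, fst b)"
      using conn1[of "fst b" origin] witnessed_conn[OF KL(2)] 2 by simp
    moreover have "(origin, fst b) \<in> L"
      using conn1[of "fst b" origin] witnessed_conn[OF KL(3)] 2 by simp
    ultimately show False using KL(1) by blast
  next
    case 3 then show False using conn_time(1)[OF cx] tb x by simp
  qed
qed

definition Qev :: "'d::finite cfg \<Rightarrow> 'd vtx \<Rightarrow> 'd vtx \<Rightarrow> bool" where
  "Qev \<omega> s x \<longleftrightarrow> \<omega> (origin, s) \<and> isbond (s, x) \<and> \<omega> (s, x) \<and>
    (\<exists>w. w \<noteq> s \<and> isbond (origin, w) \<and> \<omega> (origin, w) \<and> isbond (w, x) \<and> \<omega> (w, x))"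

lemma lhs_Q:
  assumes b: "isbond (origin, s)" and x: "snd x = 2"
  shows "(dconn \<omega> origin (fst (origin, s)) \<and> Eev \<omega> (origin, s) x (Ctil \<omega> (origin, s) origin))
    \<longleftrightarrow> Qev \<omega> s x"
proof -
  have ts: "snd s = 1" using b by (simp add: isbond_def)
  have xs: "snd x = Suc (snd s)" using ts x by simp
  have xo: "snd x = Suc (Suc (snd origin))" using x by simp
  have so: "snd s = Suc (snd origin)" using ts by simp
  have d: "dconn \<omega> origin origin"
    unfolding dconn_def bdisj_def witnessed_def by (rule exI[of _ "{}"], rule exI[of _ "{}"]) (simp add: conn_refl)
  have sx: "s \<noteq> x" "x \<noteq> s" using ts x by auto
  have bc: "bconn \<omega> (origin, s) x \<longleftrightarrow> \<omega> (origin, s) \<and> isbond (s, x) \<and> \<omega> (s, x)"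
    unfolding bconn_def using conn1[OF xs] by simp
  have ct: "x \<in> Ctil \<omega> (origin, s) origin \<longleftrightarrow>
    (\<exists>w. w \<noteq> s \<and> isbond (origin, w) \<and> \<omega> (origin, w) \<and> isbond (w, x) \<and> \<omega> (w, x))"
    unfolding Ctil_def using conn2[OF xo, of "fun_upd \<omega> (origin, s) False"] sx by auto
  have nots: "s \<notin> Ctil \<omega> (origin, s) origin"
    unfolding Ctil_def using conn1[OF so, of "fun_upd \<omega> (origin, s) False"] by simp
  have piv: "pivotal \<omega> c s x \<Longrightarrow> fst c = s" for c
    unfolding pivotal_def using conn1[OF xs, of \<omega>] conn1[OF xs, of "fun_upd \<omega> c False"]
    by (cases "c = (s, x)") auto
  show ?thesis unfolding Eev_def Qev_def using d bc ct nots piv by auto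
qed

lemma rhs_Q:
  assumes b: "isbond (origin, s)" and x: "snd x = 2"
  shows "bdisj (\<lambda>\<omega>. bconn \<omega> (origin, s) x) (\<lambda>\<omega>. conn \<omega> origin x) \<omega> \<longleftrightarrow> Qev \<omega> s x"
proof -
  have ts: "snd s = 1" using b by (simp add: isbond_def)
  have xs: "snd x = Suc (snd s)" using ts x by simp
  have xo: "snd x = Suc (Suc (snd origin))" using x by simp
  show ?thesis
  proof
    assume "bdisj (\<lambda>\<omega>. bconn \<omega> (origin, s) x) (\<lambda>\<omega>. conn \<omega> origin x) \<omega>"
    then obtain K L where KL: "K \<inter> L = {}" "witnessed K (\<lambda>\<omega>. bconn \<omega> (origin, s) x) \<omega>"
      "witnessed L (\<lambda>\<omega>. conn \<omega> origin x) \<omega>"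
      unfolding bdisj_def by blast
    have bc: "\<omega> (origin, s) \<and> isbond (s, x) \<and> \<omega> (s, x)"
      using witnessed_self[OF KL(2)] conn1[OF xs] unfolding bconn_def by simp
    have inK: "(origin, s) \<in> K"
    proof (rule ccontr)
      assume "(origin, s) \<notin> K"
      then have "\<forall>b\<in>K. (fun_upd \<omega> (origin, s) False) b = \<omega> b" by auto
      then have "bconn (fun_upd \<omega> (origin, s) False) (origin, s) x"
        using KL(2) unfolding witnessed_def by blast
      then show False unfolding bconn_def by simp
    qed
    obtain w where w: "isbond (origin, w)" "(origin, w) \<in> L" "\<omega> (origin, w)" "isbond (w, x)" "\<omega> (w, x)"
    proof -
      have "conn (\<lambda>c. c \<in> L \<and> \<omega> c) origin x" using witnessed_conn[OF KL(3)] .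
      then obtain w where "isbond (origin, w)" "(\<lambda>c. c \<in> L \<and> \<omega> c) (origin, w)"
        "isbond (w, x)" "(\<lambda>c. c \<in> L \<and> \<omega> c) (w, x)"
        using conn2[OF xo, of "\<lambda>c. c \<in> L \<and> \<omega> c"] by blast
      then show ?thesis using that by blast
    qed
    have "w \<noteq> s" using inK w(2) KL(1) by blast
    then show "Qev \<omega> s x" unfolding Qev_def using bc w by blast
  next
    assume "Qev \<omega> s x"
    then obtain w where q: "\<omega> (origin, s)" "isbond (s, x)" "\<omega> (s, x)" "w \<noteq> s"
      "isbond (origin, w)" "\<omega> (origin, w)" "isbond (w, x)" "\<omega> (w, x)"
      unfolding Qev_def by blast
    have so: "s \<noteq> origin" using ts by auto
    have xn: "x \<noteq> s" "x \<noteq> w" "x \<noteq> origin" using x ts bond_time[OF q(7)] by auto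
    show "bdisj (\<lambda>\<omega>. bconn \<omega> (origin, s) x) (\<lambda>\<omega>. conn \<omega> origin x) \<omega>"
      unfolding bdisj_def
    proof (intro exI conjI)
      show "{(origin, s), (s, x)} \<inter> {(origin, w), (w, x)} = {}"
        using q(4) so xn by blast
      show "witnessed {(origin, s), (s, x)} (\<lambda>\<omega>. bconn \<omega> (origin, s) x) \<omega>"
        unfolding witnessed_def
      proof (intro allI impI)
        fix \<omega>' assume a: "\<forall>b\<in>{(origin, s), (s, x)}. \<omega>' b = \<omega> b"
        then have "\<omega>' (origin, s)" "\<omega>' (s, x)" using q(1,3) by auto
        then show "bconn \<omega>' (origin, s) x" unfolding bconn_def using conn1[OF xs, of \<omega>'] q(2) by simp
      qed
      show "witnessed {(origin, w), (w, x)} (\<lambda>\<omega>. conn \<omega> origin x) \<omega>"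
        unfolding witnessed_def
      proof (intro allI impI)
        fix \<omega>' assume a: "\<forall>b\<in>{(origin, w), (w, x)}. \<omega>' b = \<omega> b"
        then have "\<omega>' (origin, w)" "\<omega>' (w, x)" using q(6,8) by auto
        then show "conn \<omega>' origin x" using conn2[OF xo, of \<omega>'] q(5,7) by blast
      qed
    qed
  qed
qed

lemma Pperc_prob: "prob_space (Pperc p)"
  unfolding Pperc_def by (rule prob_space_PiM) (rule prob_space_measure_pmf)

lemma Pperc_single:
  fixes b :: "'d::finite bnd"
  shows "emeasure (Pperc p) {\<omega> \<in> space (Pperc p). \<omega> b \<in> {True}}
    = emeasure (measure_pmf (bernoulli_pmf (bondprob p b))) {True}"
proof -
  interpret P: product_prob_space "\<lambda>b. measure_pmf (bernoulli_pmf (bondprob p b))" "UNIV :: 'd bnd set"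
    by (intro product_prob_space.intro product_sigma_finite.intro product_prob_space_axioms.intro
        prob_space_imp_sigma_finite prob_space_measure_pmf)
  show ?thesis
    unfolding Pperc_def by (rule P.emeasure_PiM_Collect_single) simp_all
qed

lemma Pperc_single_sets:
  fixes b :: "'d::finite bnd"
  shows "{\<omega> \<in> space (Pperc p). \<omega> b \<in> {True}} \<in> sets (Pperc p)"
  unfolding Pperc_def by (rule sets_Collect_single) simp_all

lemma rhs_zero:
  fixes s :: "'d::finite vtx"
  assumes nb: "\<not> isbond (origin, s)"
  shows "measure (Pperc p) {\<omega> \<in> space (Pperc p).
      bdisj (\<lambda>\<omega>. bconn \<omega> (origin, s) x) (\<lambda>\<omega>. conn \<omega> origin x) \<omega>} = (0::real)"
proof -
  interpret P: prob_space "Pperc p" by (rule Pperc_prob)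
  let ?B = "{\<omega> \<in> space (Pperc p). \<omega> (origin, s) \<in> {True}}"
  have bp: "bondprob p (origin, s) = 0" using nb by (simp add: bondprob_def)
  have "emeasure (Pperc p) ?B = emeasure (measure_pmf (bernoulli_pmf (bondprob p (origin, s)))) {True}"
    by (rule Pperc_single)
  also have "\<dots> = 0" unfolding bp emeasure_pmf_single by simp
  finally have B0: "emeasure (Pperc p) ?B = 0" .
  have Bs: "?B \<in> sets (Pperc p)" by (rule Pperc_single_sets)
  have sub: "{\<omega> \<in> space (Pperc p).
      bdisj (\<lambda>\<omega>. bconn \<omega> (origin, s) x) (\<lambda>\<omega>. conn \<omega> origin x) \<omega>} \<subseteq> ?B"
  proof
    fix \<omega> assume "\<omega> \<in> {\<omega> \<in> space (Pperc p).
      bdisj (\<lambda>\<omega>. bconn \<omega> (origin, s) x) (\<lambda>\<omega>. conn \<omega> origin x) \<omega>}"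
    then have "\<omega> \<in> space (Pperc p)" "bdisj (\<lambda>\<omega>. bconn \<omega> (origin, s) x) (\<lambda>\<omega>. conn \<omega> origin x) \<omega>"
      by auto
    then obtain K where "witnessed K (\<lambda>\<omega>. bconn \<omega> (origin, s) x) \<omega>" "\<omega> \<in> space (Pperc p)"
      unfolding bdisj_def by blast
    then show "\<omega> \<in> ?B" using witnessed_self[of K "\<lambda>\<omega>. bconn \<omega> (origin, s) x" \<omega>]
      unfolding bconn_def by blast
  qed
  have "measure (Pperc p) ?B = 0" using B0 by (simp add: measure_def)
  moreover have "measure (Pperc p) {\<omega> \<in> space (Pperc p).
      bdisj (\<lambda>\<omega>. bconn \<omega> (origin, s) x) (\<lambda>\<omega>. conn \<omega> origin x) \<omega>} \<le> measure (Pperc p) ?B"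
    by (rule P.finite_measure_mono[OF sub Bs])
  moreover have "0 \<le> measure (Pperc p) {\<omega> \<in> space (Pperc p).
      bdisj (\<lambda>\<omega>. bconn \<omega> (origin, s) x) (\<lambda>\<omega>. conn \<omega> origin x) \<omega>}"
    by (rule measure_nonneg)
  ultimately show ?thesis by linarith
qed

theorem lemma5p3:
  fixes x :: "'d::finite vtx"
  assumes "snd x = 2"
  shows "Pi1 (pc TYPE('d)) x =
    (\<Sum>\<^sub>\<infinity> s \<in> {s :: 'd vtx. snd s = 1}.
       measure (Pperc (pc TYPE('d))) {\<omega> \<in> space (Pperc (pc TYPE('d))).
          bdisj (\<lambda>\<omega>. bconn \<omega> (origin, s) x) (\<lambda>\<omega>. conn \<omega> origin x) \<omega>})"
proof -
  define P :: "'d cfg measure" where "P = Pperc (pc TYPE('d))"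
  define g where "g b = measure P {\<omega> \<in> space P.
        dconn \<omega> origin (fst b) \<and> Eev \<omega> b x (Ctil \<omega> b origin)}" for b :: "'d bnd"
  define f where "f s = measure P {\<omega> \<in> space P.
          bdisj (\<lambda>\<omega>. bconn \<omega> (origin, s) x) (\<lambda>\<omega>. conn \<omega> origin x) \<omega>}" for s :: "'d vtx"
  define T where "T = {s :: 'd vtx. isbond (origin, s)}"
  have lhs: "Pi1 (pc TYPE('d)) x = infsum g {b. isbond b}"
    unfolding Pi1_def g_def P_def ..
  have rhs: "(\<Sum>\<^sub>\<infinity> s \<in> {s :: 'd vtx. snd s = 1}.
       measure (Pperc (pc TYPE('d))) {\<omega> \<in> space (Pperc (pc TYPE('d))).
          bdisj (\<lambda>\<omega>. bconn \<omega> (origin, s) x) (\<lambda>\<omega>. conn \<omega> origin x) \<omega>}) = infsum f {s. snd s = 1}"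
    unfolding f_def P_def ..
  have s1: "infsum g {b. isbond b} = infsum g (Pair origin ` T)"
  proof (rule infsum_cong_neutral)
    fix b assume b: "b \<in> {b. isbond b} - Pair origin ` T"
    then have "fst b \<noteq> origin" unfolding T_def by (cases b) auto
    then have eq: "{\<omega> \<in> space P. dconn \<omega> origin (fst b) \<and> Eev \<omega> b x (Ctil \<omega> b origin)} = {}"
      using lhs_zero[of b x] b assms by auto
    show "g b = 0" unfolding g_def eq by simp
  qed (auto simp: T_def)
  have s2: "infsum g (Pair origin ` T) = infsum (g \<circ> Pair origin) T"
    by (rule infsum_reindex) (simp add: inj_on_def)
  have s3: "infsum (g \<circ> Pair origin) T = infsum f {s. snd s = 1}"
  proof (rule infsum_cong_neutral)
    fix s assume "s \<in> {s. snd s = 1} - T"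
    then have "\<not> isbond (origin, s)" unfolding T_def by simp
    then show "f s = 0" unfolding f_def P_def by (rule rhs_zero)
  next
    fix s assume "s \<in> T - {s. snd s = 1}"
    then show "(g \<circ> Pair origin) s = 0" unfolding T_def by (simp add: isbond_def)
  next
    fix s assume s: "s \<in> T \<inter> {s. snd s = 1}"
    then have "isbond (origin, s)" unfolding T_def by simp
    then have "{\<omega> \<in> space P. dconn \<omega> origin (fst (origin, s)) \<and> Eev \<omega> (origin, s) x (Ctil \<omega> (origin, s) origin)}
      = {\<omega> \<in> space P. bdisj (\<lambda>\<omega>. bconn \<omega> (origin, s) x) (\<lambda>\<omega>. conn \<omega> origin x) \<omega>}"
      using lhs_Q[of s x] rhs_Q[of s x] assms by auto
    then show "(g \<circ> Pair origin) s = f s" unfolding g_def f_def o_def by (simp only:)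
  qed
  show ?thesis using lhs rhs s1 s2 s3 by simp
qed

end
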